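(* Let $\varphi=(\varphi_1,\varphi_2)$ be a solution of the system $(S_1^0)$ on $(0,\infty)$. (i) If $\varphi_1(r),\varphi_2(r)\to0$ as $r\to0^+$ and $\varphi_1(r),\varphi_2(r)>0$ for all sufficiently small $r>0$, then $\varphi_1(r)>0$ and $\varphi_2(r)>0$ for all $r\in(0,\infty)$. (ii) If $\varphi_1(r),\varphi_2(r)\to0$ as $r\to\infty$ and $\varphi_1(r),\varphi_2(r)>0$ for all sufficiently large $r$, then $\varphi_1(r)>0$ and $\varphi_2(r)>0$ for all $r\in(0,\infty)$.
   Context: Let $w:[0,\infty)\to\mathbb{R}$ be the unique solution of $w''+\frac1r w'-\frac1{r^2}w+(1-w^2)w=0$ on $(0,\infty)$ with $w(0)=0$ and $w(r)\to1$ as $r\to\infty$; it satisfies $0<w<1$ and $w'>0$ on $(0,\infty)$. The system $(S_1^0)$ is, for $\varphi=(\varphi_1,\varphi_2)$ real-valued, $$\varphi''+\Big(2\frac{w'}{w}+\frac1r\Big)\varphi'-\frac1{r^2}\begin{pmatrix}1&2\\2&1+2w^2r^2\end{pmatrix}\varphi=0.$$ *)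

theory Defs
  imports "HOL-Analysis.Analysis"
begin

text \<open>The profile w: solution on (0,inf) of
  w'' + w'/r - w/r^2 + (1 - w^2) w = 0 with w(0) = 0 and w(r) -> 1 as r -> inf.
  w is continuous on [0,inf); w' and w'' are its derivatives on (0,inf).
  The facts 0 < w < 1 and w' > 0 on (0,inf), stated in the context, are included.\<close>
definition vortex_profile :: "(real \<Rightarrow> real) \<Rightarrow> (real \<Rightarrow> real) \<Rightarrow> (real \<Rightarrow> real) \<Rightarrow> bool" where
  "vortex_profile w w' w'' \<longleftrightarrow>
     continuous_on {0..} w \<and> w 0 = 0 \<and> (w \<longlongrightarrow> 1) at_top \<and>
     (\<forall>r>0. (w has_real_derivative w' r) (at r) \<and> (w' has_real_derivative w'' r) (at r) \<and>
            w'' r + w' r / r - w r / r^2 + (1 - (w r)^2) * w r = 0 \<and>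
            0 < w r \<and> w r < 1 \<and> 0 < w' r)"

definition solves_S10 ::
  "(real \<Rightarrow> real) \<Rightarrow> (real \<Rightarrow> real) \<Rightarrow>
   (real \<Rightarrow> real) \<Rightarrow> (real \<Rightarrow> real) \<Rightarrow> (real \<Rightarrow> real) \<Rightarrow> (real \<Rightarrow> real) \<Rightarrow> (real \<Rightarrow> real) \<Rightarrow> (real \<Rightarrow> real) \<Rightarrow> bool" where
  "solves_S10 w w' p1 p1' p1'' p2 p2' p2'' \<longleftrightarrow>
     (\<forall>r>0. (p1 has_real_derivative p1' r) (at r) \<and> (p1' has_real_derivative p1'' r) (at r) \<and>
            (p2 has_real_derivative p2' r) (at r) \<and> (p2' has_real_derivative p2'' r) (at r) \<and>
            p1'' r + (2 * w' r / w r + 1 / r) * p1' r - (p1 r + 2 * p2 r) / r^2 = 0 \<and>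
            p2'' r + (2 * w' r / w r + 1 / r) * p2' r
              - (2 * p1 r + (1 + 2 * (w r)^2 * r^2) * p2 r) / r^2 = 0)"

end

theory Submission
  imports Defs
begin

lemma core:
  fixes f f' G G' w :: "real \<Rightarrow> real"
  assumes "0 < x" "x < s" "s < y" "f x < f s" "f y < f s"
    and df: "\<And>r. r > 0 \<Longrightarrow> (f has_real_derivative f' r) (at r)"
    and dG: "\<And>r. x < r \<Longrightarrow> r < y \<Longrightarrow> (G has_real_derivative G' r) (at r) \<and> G' r > 0"
    and Gdef: "\<And>r. r > 0 \<Longrightarrow> G r = r * (w r)^2 * f' r"
    and wpos: "\<And>r. r > 0 \<Longrightarrow> w r > 0"
  shows False
proof -
  obtain a where a: "x < a" "a < s" "f s - f x = (s - x) * f' a"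
    using MVT2[of x s f f'] assms(1,2) df by force
  obtain b where b: "s < b" "b < y" "f y - f s = (y - s) * f' b"
    using MVT2[of s y f f'] assms(1,2,3) df by force
  have fa: "f' a > 0"
  proof -
    have "0 < (s - x) * f' a" using a(3) assms(4) by linarith
    thus ?thesis using assms(2) by (simp add: zero_less_mult_iff)
  qed
  have fb: "f' b < 0"
  proof -
    have "(y - s) * f' b < 0" using b(3) assms(5) by linarith
    thus ?thesis using b(2) assms(3) by (simp add: mult_less_0_iff)
  qed
  have "G a < G b"
  proof (rule DERIV_pos_imp_increasing[of a b G])
    show "a < b" using a b by simp
  next
    fix t assume "a \<le> t" "t \<le> b"
    hence "x < t" "t < y" using a b by auto
    thus "\<exists>z. (G has_real_derivative z) (at t) \<and> z > 0" using dG by blast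
  qed
  moreover have "G a > 0" using Gdef[of a] wpos[of a] fa a assms(1) by simp
  moreover have "G b < 0" using Gdef[of b] wpos[of b] fb b a assms(1)
    by (simp add: mult_pos_neg)
  ultimately show False by simp
qed

lemma Gderiv:
  fixes w w' f f' f'' h :: "real \<Rightarrow> real"
  assumes "r > 0" "w r > 0"
    and "(w has_real_derivative w' r) (at r)"
    and "(f' has_real_derivative f'' r) (at r)"
    and "f'' r + (2 * w' r / w r + 1 / r) * f' r - h r / r^2 = 0"
  shows "((\<lambda>r. r * (w r)^2 * f' r) has_real_derivative (w r)^2 * h r / r) (at r)"
proof -
  have "((\<lambda>r. r * (w r)^2 * f' r) has_real_derivative
     (1 * (w r)^2 + r * (2 * w r * w' r)) * f' r + r * (w r)^2 * f'' r) (at r)"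
    by (auto intro!: derivative_eq_intros assms)
  moreover have e: "f'' r = h r / r^2 - (2 * w' r / w r + 1 / r) * f' r" using assms(5) by simp
  have "(1 * (w r)^2 + r * (2 * w r * w' r)) * f' r + r * (w r)^2 * f'' r = (w r)^2 * h r / r"
    unfolding e using assms(1,2) by (simp add: field_simps power2_eq_square)
  ultimately show ?thesis by simp
qed


theorem lemma3p7:
  fixes w w' w'' p1 p1' p1'' p2 p2' p2'' :: "real \<Rightarrow> real"
  assumes "vortex_profile w w' w''"
    and "solves_S10 w w' p1 p1' p1'' p2 p2' p2''"
  shows "((p1 \<longlongrightarrow> 0) (at_right 0) \<and> (p2 \<longlongrightarrow> 0) (at_right 0) \<and>
          (\<forall>\<^sub>F r in at_right 0. p1 r > 0 \<and> p2 r > 0)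
          \<longrightarrow> (\<forall>r>0. p1 r > 0 \<and> p2 r > 0))
       \<and> ((p1 \<longlongrightarrow> 0) at_top \<and> (p2 \<longlongrightarrow> 0) at_top \<and>
          (\<forall>\<^sub>F r in at_top. p1 r > 0 \<and> p2 r > 0)
          \<longrightarrow> (\<forall>r>0. p1 r > 0 \<and> p2 r > 0))"
proof -
  have W: "\<And>r. r > 0 \<Longrightarrow> (w has_real_derivative w' r) (at r) \<and> 0 < w r"
    using assms(1) unfolding vortex_profile_def by blast
  have S: "\<And>r. r > 0 \<Longrightarrow> (p1 has_real_derivative p1' r) (at r) \<and> (p1' has_real_derivative p1'' r) (at r) \<and>
            (p2 has_real_derivative p2' r) (at r) \<and> (p2' has_real_derivative p2'' r) (at r) \<and>
            p1'' r + (2 * w' r / w r + 1 / r) * p1' r - (p1 r + 2 * p2 r) / r^2 = 0 \<and>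
            p2'' r + (2 * w' r / w r + 1 / r) * p2' r
              - (2 * p1 r + (1 + 2 * (w r)^2 * r^2) * p2 r) / r^2 = 0"
    using assms(2) unfolding solves_S10_def by blast
  have C1: "\<And>r. r > 0 \<Longrightarrow> isCont p1 r" using S DERIV_isCont by blast
  have C2: "\<And>r. r > 0 \<Longrightarrow> isCont p2 r" using S DERIV_isCont by blast
  have key: False if xs: "0 < x" "x < s" "s < y"
    and pos: "\<And>r. x < r \<Longrightarrow> r < y \<Longrightarrow> p1 r > 0 \<and> p2 r > 0"
    and alt: "(p1 x < p1 s \<and> p1 y < p1 s) \<or> (p2 x < p2 s \<and> p2 y < p2 s)" for x s y
  proof -
    from alt show False
    proof
      assume h: "p1 x < p1 s \<and> p1 y < p1 s"
      show False
      proof (rule core[of x s y p1 p1' "\<lambda>r. r * (w r)^2 * p1' r"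
            "\<lambda>r. (w r)^2 * (p1 r + 2 * p2 r) / r" w])
        fix r assume r: "x < r" "r < y"
        hence r0: "r > 0" using xs by simp
        show "((\<lambda>r. r * (w r)^2 * p1' r) has_real_derivative (w r)^2 * (p1 r + 2 * p2 r) / r) (at r)
              \<and> (w r)^2 * (p1 r + 2 * p2 r) / r > 0"
        proof
          show "((\<lambda>r. r * (w r)^2 * p1' r) has_real_derivative (w r)^2 * (p1 r + 2 * p2 r) / r) (at r)"
            using Gderiv[of r w w' p1' p1'' "\<lambda>r. p1 r + 2 * p2 r"] r0 W[OF r0] S[OF r0] by simp
          show "(w r)^2 * (p1 r + 2 * p2 r) / r > 0" using pos[OF r] W[OF r0] r0 by simp
        qed
      qed (use xs h S W in auto)
    next
      assume h: "p2 x < p2 s \<and> p2 y < p2 s"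
      show False
      proof (rule core[of x s y p2 p2' "\<lambda>r. r * (w r)^2 * p2' r"
            "\<lambda>r. (w r)^2 * (2 * p1 r + (1 + 2 * (w r)^2 * r^2) * p2 r) / r" w])
        fix r assume r: "x < r" "r < y"
        hence r0: "r > 0" using xs by simp
        show "((\<lambda>r. r * (w r)^2 * p2' r) has_real_derivative (w r)^2 * (2 * p1 r + (1 + 2 * (w r)^2 * r^2) * p2 r) / r) (at r)
              \<and> (w r)^2 * (2 * p1 r + (1 + 2 * (w r)^2 * r^2) * p2 r) / r > 0"
        proof
          show "((\<lambda>r. r * (w r)^2 * p2' r) has_real_derivative (w r)^2 * (2 * p1 r + (1 + 2 * (w r)^2 * r^2) * p2 r) / r) (at r)"
            using Gderiv[of r w w' p2' p2'' "\<lambda>r. 2 * p1 r + (1 + 2 * (w r)^2 * r^2) * p2 r"] r0 W[OF r0] S[OF r0] by simp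
          have "0 < 2 * p1 r + (1 + 2 * (w r)^2 * r^2) * p2 r"
          proof -
            have "0 < (1 + 2 * (w r)^2 * r^2) * p2 r" using pos[OF r]
              by (simp add: add_pos_nonneg)
            thus ?thesis using pos[OF r] by simp
          qed
          thus "(w r)^2 * (2 * p1 r + (1 + 2 * (w r)^2 * r^2) * p2 r) / r > 0" using W[OF r0] r0 by simp
        qed
      qed (use xs h S W in auto)
    qed
  qed
  have nbhd: "\<exists>d>0. \<forall>z. z \<noteq> r0 \<and> dist z r0 < d \<longrightarrow> p1 z > 0 \<and> p2 z > 0"
    if "r0 > 0" "p1 r0 > 0" "p2 r0 > 0" for r0
  proof -
    have "\<forall>\<^sub>F z in at r0. p1 z > 0"
      using order_tendstoD(1)[OF C1[OF that(1), unfolded isCont_def] that(2)] .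
    moreover have "\<forall>\<^sub>F z in at r0. p2 z > 0"
      using order_tendstoD(1)[OF C2[OF that(1), unfolded isCont_def] that(3)] .
    ultimately have "\<forall>\<^sub>F z in at r0. p1 z > 0 \<and> p2 z > 0" by eventually_elim auto
    thus ?thesis unfolding eventually_at by simp
  qed
  define Z where "Z = {r. r > 0 \<and> \<not> (p1 r > 0 \<and> p2 r > 0)}"
  show ?thesis
  proof (intro conjI impI)
    assume H: "(p1 \<longlongrightarrow> 0) (at_right 0) \<and> (p2 \<longlongrightarrow> 0) (at_right 0) \<and>
          (\<forall>\<^sub>F r in at_right 0. p1 r > 0 \<and> p2 r > 0)"
    show "\<forall>r>0. p1 r > 0 \<and> p2 r > 0"
    proof (rule ccontr)
      assume "\<not> (\<forall>r>0. p1 r > 0 \<and> p2 r > 0)"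
      hence Zne: "Z \<noteq> {}" unfolding Z_def by auto
      obtain \<delta> where d: "\<delta> > 0" "\<And>r. r > 0 \<Longrightarrow> r < \<delta> \<Longrightarrow> p1 r > 0 \<and> p2 r > 0"
        using H unfolding eventually_at_right_field by auto
      have bdd: "bdd_below Z" unfolding Z_def bdd_below_def by (rule exI[of _ 0]) auto
      define r0 where "r0 = Inf Z"
      have "\<delta> \<le> r0" unfolding r0_def
        by (rule cInf_greatest[OF Zne]) (use d in \<open>force simp: Z_def\<close>)
      hence r0pos: "r0 > 0" using d by simp
      have posb: "p1 r > 0 \<and> p2 r > 0" if "0 < r" "r < r0" for r
      proof (rule ccontr)
        assume "\<not> ?thesis"
        hence "r \<in> Z" using that unfolding Z_def by auto
        hence "r0 \<le> r" unfolding r0_def using cInf_lower[OF _ bdd] by blast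
        thus False using that by simp
      qed
      have r0Z: "r0 \<in> Z"
      proof (rule ccontr)
        assume "r0 \<notin> Z"
        hence "p1 r0 > 0" "p2 r0 > 0" using r0pos unfolding Z_def by auto
        then obtain e where e: "e > 0" "\<And>z. z \<noteq> r0 \<and> dist z r0 < e \<Longrightarrow> p1 z > 0 \<and> p2 z > 0"
          using nbhd[OF r0pos] by blast
        have "Inf Z < r0 + e" using e r0_def by simp
        then obtain z where z: "z \<in> Z" "z < r0 + e" using cInf_less_iff[OF Zne bdd] by blast
        have "r0 \<le> z" unfolding r0_def using cInf_lower[OF z(1) bdd] .
        hence "z \<noteq> r0" using z(1) \<open>r0 \<notin> Z\<close> by auto
        hence "p1 z > 0 \<and> p2 z > 0" using e(2)[of z] z(2) \<open>r0 \<le> z\<close> by (simp add: dist_real_def)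
        thus False using z(1) unfolding Z_def by auto
      qed
      define s where "s = r0 / 2"
      have s: "0 < s" "s < r0" using r0pos by (auto simp: s_def)
      have ps: "p1 s > 0" "p2 s > 0" using posb[OF s] by auto
      have "\<forall>\<^sub>F r in at_right 0. p1 r < p1 s"
        using order_tendstoD(2)[of p1 0 "at_right 0" "p1 s"] H ps by auto
      moreover have "\<forall>\<^sub>F r in at_right 0. p2 r < p2 s"
        using order_tendstoD(2)[of p2 0 "at_right 0" "p2 s"] H ps by auto
      ultimately have "\<forall>\<^sub>F r in at_right 0. p1 r < p1 s \<and> p2 r < p2 s"
        by eventually_elim auto
      then obtain b where b: "b > 0" "\<And>r. r > 0 \<Longrightarrow> r < b \<Longrightarrow> p1 r < p1 s \<and> p2 r < p2 s"
        unfolding eventually_at_right_field by auto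
      define x where "x = min b s / 2"
      have x: "0 < x" "x < s" "x < b" using b s by (auto simp: x_def)
      show False
      proof (rule key[of x s r0])
        show "\<And>r. x < r \<Longrightarrow> r < r0 \<Longrightarrow> p1 r > 0 \<and> p2 r > 0" using posb x by auto
        show "p1 x < p1 s \<and> p1 r0 < p1 s \<or> p2 x < p2 s \<and> p2 r0 < p2 s"
          using b(2)[OF x(1) x(3)] r0Z ps unfolding Z_def by auto
      qed (use x s in auto)
    qed
  next
    assume H: "(p1 \<longlongrightarrow> 0) at_top \<and> (p2 \<longlongrightarrow> 0) at_top \<and>
          (\<forall>\<^sub>F r in at_top. p1 r > 0 \<and> p2 r > 0)"
    show "\<forall>r>0. p1 r > 0 \<and> p2 r > 0"
    proof (rule ccontr)
      assume "\<not> (\<forall>r>0. p1 r > 0 \<and> p2 r > 0)"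
      hence Zne: "Z \<noteq> {}" unfolding Z_def by auto
      obtain T where T: "\<And>r. r \<ge> T \<Longrightarrow> p1 r > 0 \<and> p2 r > 0"
        using H unfolding eventually_at_top_linorder by auto
      have bdd: "bdd_above Z" unfolding bdd_above_def
      proof (intro exI ballI)
        fix z assume "z \<in> Z"
        hence "\<not> (p1 z > 0 \<and> p2 z > 0)" unfolding Z_def by auto
        hence "\<not> (z \<ge> T)" using T by blast
        thus "z \<le> T" by simp
      qed
      define r0 where "r0 = Sup Z"
      obtain z0 where z0: "z0 \<in> Z" using Zne by auto
      have "z0 \<le> r0" unfolding r0_def using cSup_upper[OF z0 bdd] .
      hence r0pos: "r0 > 0" using z0 unfolding Z_def by auto
      have posb: "p1 r > 0 \<and> p2 r > 0" if "r0 < r" for r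
      proof (rule ccontr)
        assume "\<not> ?thesis"
        hence "r \<in> Z" using that r0pos unfolding Z_def by auto
        hence "r \<le> r0" unfolding r0_def using cSup_upper[OF _ bdd] by blast
        thus False using that by simp
      qed
      have r0Z: "r0 \<in> Z"
      proof (rule ccontr)
        assume "r0 \<notin> Z"
        hence "p1 r0 > 0" "p2 r0 > 0" using r0pos unfolding Z_def by auto
        then obtain e where e: "e > 0" "\<And>z. z \<noteq> r0 \<and> dist z r0 < e \<Longrightarrow> p1 z > 0 \<and> p2 z > 0"
          using nbhd[OF r0pos] by blast
        have "r0 - e < Sup Z" using e r0_def by simp
        then obtain z where z: "z \<in> Z" "r0 - e < z" using less_cSup_iff[OF Zne bdd] by blast
        have "z \<le> r0" unfolding r0_def using cSup_upper[OF z(1) bdd] .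
        hence "z \<noteq> r0" using z(1) \<open>r0 \<notin> Z\<close> by auto
        hence "p1 z > 0 \<and> p2 z > 0" using e(2)[of z] z(2) \<open>z \<le> r0\<close> by (simp add: dist_real_def)
        thus False using z(1) unfolding Z_def by auto
      qed
      define s where "s = r0 + 1"
      have s: "r0 < s" by (auto simp: s_def)
      have ps: "p1 s > 0" "p2 s > 0" using posb[OF s] by auto
      have "\<forall>\<^sub>F r in at_top. p1 r < p1 s"
        using order_tendstoD(2)[of p1 0 "at_top" "p1 s"] H ps by auto
      moreover have "\<forall>\<^sub>F r in at_top. p2 r < p2 s"
        using order_tendstoD(2)[of p2 0 "at_top" "p2 s"] H ps by auto
      ultimately have "\<forall>\<^sub>F r in at_top. p1 r < p1 s \<and> p2 r < p2 s"
        by eventually_elim auto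
      then obtain N where N: "\<And>r. r \<ge> N \<Longrightarrow> p1 r < p1 s \<and> p2 r < p2 s"
        unfolding eventually_at_top_linorder by auto
      define y where "y = max N (s + 1)"
      have y: "s < y" "N \<le> y" by (auto simp: y_def)
      show False
      proof (rule key[of r0 s y])
        show "\<And>r. r0 < r \<Longrightarrow> r < y \<Longrightarrow> p1 r > 0 \<and> p2 r > 0" using posb by auto
        show "p1 r0 < p1 s \<and> p1 y < p1 s \<or> p2 r0 < p2 s \<and> p2 y < p2 s"
          using N[OF y(2)] r0Z ps r0pos unfolding Z_def by auto
      qed (use r0pos s y in auto)
    qed
  qed
qed

end
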